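(* For integers $n\ge0$ and $0\le k\le n$, the number of ways to place $k$ dots in cells of the double staircase $2\delta_n$ such that each row contains at most one dot and each column contains at most one dot is $$\frac{(n+1)!}{(n-k+1)!}\binom{n}{k}.$$
   Context: The double staircase $2\delta_n$ is the Young diagram with $n$ rows of lengths $2n,2n-2,\dots,2$ (left-justified; $2\delta_0$ is empty). *)

theory Defs
  imports Complex_Main
begin

text \<open>Cells (i,j) of the double staircase 2 delta_n, rows i = 1..n (top to bottom),
  row i has length 2(n - i + 1), columns j = 1..2(n-i+1), left-justified.\<close>
definition double_staircase :: "nat \<Rightarrow> (nat \<times> nat) set" where
  "double_staircase n = {(i, j). 1 \<le> i \<and> i \<le> n \<and> 1 \<le> j \<and> j \<le> 2 * (n - i + 1)}"

definition rook_placements :: "(nat \<times> nat) set \<Rightarrow> nat \<Rightarrow> (nat \<times> nat) set set" where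
  "rook_placements D k = {S. S \<subseteq> D \<and> card S = k \<and>
      (\<forall>c\<in>S. \<forall>d\<in>S. fst c = fst d \<longrightarrow> c = d) \<and>
      (\<forall>c\<in>S. \<forall>d\<in>S. snd c = snd d \<longrightarrow> c = d)}"

end

theory Submission
  imports Defs
begin

definition DD :: "nat \<Rightarrow> nat \<Rightarrow> (nat \<times> nat) set" where
  "DD a n = {(i, j). a < i \<and> i \<le> n \<and> 1 \<le> j \<and> j \<le> 2 * (n - i + 1)}"

fun g :: "nat \<Rightarrow> nat \<Rightarrow> nat" where
  "g 0 k = (if k = 0 then 1 else 0)"
| "g (Suc m) 0 = 1"
| "g (Suc m) (Suc k) = g m (Suc k) + (2 * Suc m - k) * g m k"

lemma DD_finite: "finite (DD a n)"
proof -
  have "DD a n \<subseteq> {0..n} \<times> {0..2*n+2}" unfolding DD_def by auto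
  thus ?thesis using finite_subset by blast
qed

lemma rp_finite: "finite D \<Longrightarrow> finite (rook_placements D k)"
  unfolding rook_placements_def
  by (rule finite_subset[of _ "Pow D"]) auto

lemma rp_0: "finite D \<Longrightarrow> rook_placements D 0 = {{}}"
  unfolding rook_placements_def by (auto dest: finite_subset)

lemma rp_empty: "rook_placements {} k = (if k = 0 then {{}} else {})"
  unfolding rook_placements_def by auto

lemma DD_empty: "n \<le> a \<Longrightarrow> DD a n = {}"
  unfolding DD_def by auto

lemma g_zero: "n < k \<Longrightarrow> g n k = 0"
proof (induction n arbitrary: k)
  case 0 thus ?case by simp
next
  case (Suc n) then obtain k' where "k = Suc k'" by (cases k) auto
  with Suc show ?case by simp
qed

lemma step:
  assumes an: "a < n"
  shows "card (rook_placements (DD a n) (Suc k)) =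
     card (rook_placements (DD (Suc a) n) (Suc k)) + (2 * (n - a) - k) * card (rook_placements (DD (Suc a) n) k)"
proof -
  define E where "E = DD (Suc a) n"
  define A where "A = rook_placements E (Suc k)"
  define P where "P = (SIGMA S: rook_placements E k. ({1..2*(n-a)} - snd ` S))"
  define f :: "(nat \<times> nat) set \<times> nat \<Rightarrow> (nat \<times> nat) set" where "f = (\<lambda>(S, j). insert (Suc a, j) S)"
  define B where "B = f ` P"
  have finE: "finite E" unfolding E_def by (rule DD_finite)
  have Erow: "\<And>c. c \<in> E \<Longrightarrow> fst c > Suc a" unfolding E_def DD_def by auto
  have Ecol: "\<And>c. c \<in> E \<Longrightarrow> snd c \<le> 2 * (n - a)" unfolding E_def DD_def by auto
  have EDD: "E \<subseteq> DD a n" unfolding E_def DD_def by auto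
  have eq: "rook_placements (DD a n) (Suc k) = A \<union> B"
  proof
    show "rook_placements (DD a n) (Suc k) \<subseteq> A \<union> B"
    proof
      fix S assume S: "S \<in> rook_placements (DD a n) (Suc k)"
      hence Ssub: "S \<subseteq> DD a n" and Sc: "card S = Suc k"
        and Sr: "\<forall>c\<in>S. \<forall>d\<in>S. fst c = fst d \<longrightarrow> c = d"
        and Scl: "\<forall>c\<in>S. \<forall>d\<in>S. snd c = snd d \<longrightarrow> c = d"
        unfolding rook_placements_def by auto
      have finS: "finite S" using Ssub DD_finite finite_subset by blast
      show "S \<in> A \<union> B"
      proof (cases "\<exists>c\<in>S. fst c = Suc a")
        case False
        hence "S \<subseteq> E" using Ssub unfolding E_def DD_def by fastforce
        thus ?thesis using S unfolding A_def rook_placements_def by auto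
      next
        case True
        then obtain c where c: "c \<in> S" "fst c = Suc a" by blast
        define S' where "S' = S - {c}"
        have S'E: "S' \<subseteq> E"
        proof
          fix d assume d: "d \<in> S'"
          hence "fst d \<noteq> Suc a" using Sr c unfolding S'_def by auto
          thus "d \<in> E" using d Ssub unfolding S'_def E_def DD_def by auto
        qed
        have cS': "card S' = k" using Sc c finS unfolding S'_def by simp
        have S'rp: "S' \<in> rook_placements E k"
          using S'E cS' Sr Scl unfolding rook_placements_def S'_def by auto
        have j1: "snd c \<in> {1..2*(n-a)}" using c Ssub unfolding DD_def by auto
        have j2: "snd c \<notin> snd ` S'" using Scl c unfolding S'_def by auto
        have "(S', snd c) \<in> P" using S'rp j1 j2 unfolding P_def by auto
        moreover have "S = f (S', snd c)" using c unfolding f_def S'_def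
          by (metis insert_Diff prod.collapse case_prod_conv)
        ultimately show ?thesis unfolding B_def by blast
      qed
    qed
  next
    show "A \<union> B \<subseteq> rook_placements (DD a n) (Suc k)"
    proof
      fix S assume "S \<in> A \<union> B"
      thus "S \<in> rook_placements (DD a n) (Suc k)"
      proof
        assume "S \<in> A" thus ?thesis using EDD unfolding A_def rook_placements_def by auto
      next
        assume "S \<in> B"
        then obtain S' j where SP: "(S', j) \<in> P" and S: "S = insert (Suc a, j) S'"
          unfolding B_def f_def by auto
        have S'rp: "S' \<in> rook_placements E k" and j: "j \<in> {1..2*(n-a)}" "j \<notin> snd ` S'"
          using SP unfolding P_def by auto
        have S'E: "S' \<subseteq> E" and cS': "card S' = k"
          and Sr: "\<forall>c\<in>S'. \<forall>d\<in>S'. fst c = fst d \<longrightarrow> c = d"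
          and Scl: "\<forall>c\<in>S'. \<forall>d\<in>S'. snd c = snd d \<longrightarrow> c = d"
          using S'rp unfolding rook_placements_def by auto
        have finS': "finite S'" using S'E finE finite_subset by blast
        have notin: "(Suc a, j) \<notin> S'" using S'E Erow by fastforce
        have "(Suc a, j) \<in> DD a n" using j an unfolding DD_def by auto
        hence "S \<subseteq> DD a n" using S S'E EDD by auto
        moreover have "card S = Suc k" using S notin finS' cS' by simp
        moreover have "\<forall>c\<in>S. \<forall>d\<in>S. fst c = fst d \<longrightarrow> c = d"
        proof (intro ballI impI)
          fix c d assume c: "c \<in> S" and d: "d \<in> S" and cd: "fst c = fst d"
          show "c = d"
          proof (cases "c = (Suc a, j)")
            case True
            hence "d = (Suc a, j)" using d cd S S'E Erow by fastforce
            thus ?thesis using True by simp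
          next
            case False
            hence "c \<in> S'" using c S by simp
            hence "d \<noteq> (Suc a, j)" using cd S'E Erow by fastforce
            hence "d \<in> S'" using d S by simp
            thus ?thesis using Sr \<open>c \<in> S'\<close> cd by blast
          qed
        qed
        moreover have "\<forall>c\<in>S. \<forall>d\<in>S. snd c = snd d \<longrightarrow> c = d"
          using Scl S j(2) by (auto simp: image_iff)
        ultimately show ?thesis unfolding rook_placements_def by auto
      qed
    qed
  qed
  have disj: "A \<inter> B = {}"
  proof -
    have "\<And>S. S \<in> A \<Longrightarrow> \<forall>c\<in>S. fst c \<noteq> Suc a" using Erow unfolding A_def rook_placements_def by fastforce
    moreover have "\<And>S. S \<in> B \<Longrightarrow> \<exists>c\<in>S. fst c = Suc a" unfolding B_def f_def by auto
    ultimately show ?thesis by blast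
  qed
  have finP: "finite P" unfolding P_def using rp_finite[OF finE] by auto
  have finA: "finite A" unfolding A_def using rp_finite[OF finE] .
  have inj: "inj_on f P"
  proof (rule inj_onI)
    fix x y assume x: "x \<in> P" and y: "y \<in> P" and fxy: "f x = f y"
    obtain S j where xx: "x = (S, j)" by (cases x)
    obtain S' j' where yy: "y = (S', j')" by (cases y)
    have SE: "S \<subseteq> E" "S' \<subseteq> E" using x y xx yy unfolding P_def rook_placements_def by auto
    have n1: "(Suc a, j) \<notin> S" "(Suc a, j') \<notin> S'" using SE Erow by fastforce+
    have "(Suc a, j) \<notin> S'" using SE Erow by fastforce
    have ins: "insert (Suc a, j) S = insert (Suc a, j') S'" using fxy xx yy unfolding f_def by simp
    have "(Suc a, j) \<in> insert (Suc a, j') S'" using ins by auto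
    hence "j = j'" using \<open>(Suc a, j) \<notin> S'\<close> by auto
    moreover have "S = S'" using ins n1 \<open>j = j'\<close> by (metis insert_ident)
    ultimately show "x = y" using xx yy by simp
  qed
  have cardB: "card B = card P" unfolding B_def using card_image[OF inj] .
  have cardP: "card P = (2 * (n - a) - k) * card (rook_placements E k)"
  proof -
    have "card P = (\<Sum>S\<in>rook_placements E k. card ({1..2*(n-a)} - snd ` S))"
      unfolding P_def by (rule card_SigmaI) (auto simp: rp_finite[OF finE])
    also have "\<dots> = (\<Sum>S\<in>rook_placements E k. 2 * (n - a) - k)"
    proof (rule sum.cong[OF refl])
      fix S assume S: "S \<in> rook_placements E k"
      hence SE: "S \<subseteq> E" and cS: "card S = k"
          and Scl: "\<forall>c\<in>S. \<forall>d\<in>S. snd c = snd d \<longrightarrow> c = d"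
        unfolding rook_placements_def by auto
      have "inj_on snd S" using Scl by (auto intro: inj_onI)
      hence c1: "card (snd ` S) = k" using cS card_image by metis
      have sub: "snd ` S \<subseteq> {1..2*(n-a)}"
      proof
        fix x assume "x \<in> snd ` S"
        then obtain c where "c \<in> S" "x = snd c" by auto
        thus "x \<in> {1..2*(n-a)}" using SE unfolding E_def DD_def by auto
      qed
      show "card ({1..2*(n-a)} - snd ` S) = 2 * (n - a) - k"
        using card_Diff_subset[OF finite_subset[OF sub] sub] c1 by simp
    qed
    finally show ?thesis by simp
  qed
  have "card (rook_placements (DD a n) (Suc k)) = card A + card B"
    using eq disj card_Un_disjoint[OF finA] finP unfolding B_def by (simp add: card_Un_disjoint)
  thus ?thesis using cardB cardP unfolding A_def E_def by simp
qed

lemma count_g: "n - a = m \<Longrightarrow> card (rook_placements (DD a n) k) = g m k"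
proof (induction m arbitrary: a k)
  case 0
  hence "DD a n = {}" by (intro DD_empty) simp
  thus ?case by (simp add: rp_empty)
next
  case (Suc m)
  hence an: "a < n" and m: "n - Suc a = m" by auto
  show ?case
  proof (cases k)
    case 0 thus ?thesis by (simp add: rp_0 DD_finite)
  next
    case (Suc k')
    show ?thesis using step[OF an, of k'] Suc.IH[OF m] Suc Suc.prems by simp
  qed
qed

lemma g_formula: "g n k * fact (n - k + 1) = fact (n + 1) * (n choose k)"
proof (induction n arbitrary: k)
  case 0 thus ?case by simp
next
  case (Suc n)
  show ?case
  proof (cases k)
    case 0 thus ?thesis by simp
  next
    case (Suc k')
    have IH1: "g n (Suc k') * fact (n - k') = fact (n + 1) * (n choose Suc k')"
      using Suc.IH[of "Suc k'"] by (cases "k' < n") (auto simp: Suc_diff_Suc g_zero)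
    have IH2: "g n k' * fact (n - k' + 1) = fact (n + 1) * (n choose k')" using Suc.IH .
    have fsplit: "fact (n - k' + 1) = (n - k' + 1) * (fact (n - k') :: nat)" by simp
    have ab: "(n - k') * (n choose k') = Suc k' * (n choose Suc k')"
      using binomial_absorb_comp[of n k'] binomial_absorption[of k' n] by simp
    have L0: "g (Suc n) k * fact (Suc n - k + 1)
        = g n (Suc k') * fact (n - k' + 1) + (2 * Suc n - k') * (g n k' * fact (n - k' + 1))"
      using Suc by (simp only: g.simps diff_Suc_Suc add_mult_distrib mult.assoc)
    have L1: "g n (Suc k') * fact (n - k' + 1) = (n - k' + 1) * (fact (n + 1) * (n choose Suc k'))"
      using fsplit IH1 by (metis mult.left_commute)
    have C: "(n - k' + 1) * (n choose Suc k') + (2 * Suc n - k') * (n choose k')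
        = (n + 2) * ((n choose k') + (n choose Suc k'))"
    proof (cases "k' \<le> n")
      case True
      have e1: "(n - k' + 1) = (n + 2) - Suc k'" "2 * Suc n - k' = (n + 2) + (n - k')" using True by auto
      have "(n + 2 - Suc k') * (n choose Suc k') + ((n + 2) + (n - k')) * (n choose k')
          = (n + 2) * ((n choose k') + (n choose Suc k'))"
      proof -
        have le: "Suc k' * (n choose Suc k') \<le> (n+2) * (n choose Suc k')" using True by (intro mult_right_mono) simp_all
        have "(n + 2 - Suc k') * (n choose Suc k') = (n+2) * (n choose Suc k') - Suc k' * (n choose Suc k')"
          by (simp add: diff_mult_distrib)
        thus ?thesis using ab le by (simp add: algebra_simps)
      qed
      thus ?thesis using e1 by simp
    next
      case False thus ?thesis by (simp add: binomial_eq_0)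
    qed
    have "g (Suc n) k * fact (Suc n - k + 1)
        = fact (n + 1) * ((n - k' + 1) * (n choose Suc k') + (2 * Suc n - k') * (n choose k'))"
    proof -
      have dist: "\<And>a b c d e :: nat. a * (b * c) + d * (b * e) = b * (a * c + d * e)"
        by (simp add: algebra_simps)
      show ?thesis unfolding L0 L1 IH2 by (rule dist)
    qed
    also have "\<dots> = fact (n + 1) * ((n + 2) * ((n choose k') + (n choose Suc k')))" using C by simp
    finally show ?thesis using Suc by (simp add: algebra_simps)
  qed
qed

theorem mainTheorem10:
  fixes n k :: nat
  assumes "k \<le> n"
  shows "real (card (rook_placements (double_staircase n) k))
         = fact (n + 1) / fact (n - k + 1) * real (n choose k)"
proof -
  have "double_staircase n = DD 0 n" unfolding double_staircase_def DD_def by auto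
  hence c: "card (rook_placements (double_staircase n) k) = g n k" using count_g[of n 0 n k] by simp
  have "real (g n k) * real (fact (n - k + 1)) = real (fact (n + 1)) * real (n choose k)"
    using arg_cong[OF g_formula[of n k], of real] by (simp only: of_nat_mult)
  hence "real (g n k) * fact (n - k + 1) = fact (n + 1) * real (n choose k)"
    by (simp only: of_nat_fact)
  moreover have "(fact (n - k + 1) :: real) > 0" by simp
  ultimately show ?thesis using c by (simp add: field_simps)
qed

end
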